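(* Let $A$ be a $\delta$-algebra, let $C_1,\dots,C_n$ be pairwise disjoint closed subsets of $\mathrm{Max}\,A$, and let $r_1,\dots,r_n\in[0,1]$. Then there exists $a\in A$ such that $\hat a(h)=r_i$ for every $i\in\{1,\dots,n\}$ and every $h\in C_i$.
   Context: An MV-algebra is an algebra $(A,\oplus,\neg,0)$ of type $(2,1,0)$ such that $(A,\oplus,0)$ is a commutative monoid, $\neg\neg a=a$, $a\oplus\neg 0=\neg 0$, and $\neg(\neg a\oplus b)\oplus b=\neg(\neg b\oplus a)\oplus a$. Derived operations: $1:=\neg 0$, $a\odot b:=\neg(\neg a\oplus\neg b)$, $a\ominus b:=a\odot\neg b$, $a\vee b:=\neg(\neg a\oplus b)\oplus b$ (join of a lattice order $\le$), $d(a,b):=(a\ominus b)\oplus(b\ominus a)$. Let $\mathcal{L}=\{\delta,\oplus,\neg,0\}$ of type $(\omega,2,1,0)$; $\tfrac12(x):=\delta(x,0,0,\dots)$. A $\delta$-algebra is an $\mathcal{L}$-algebra whose MV-reduct is an MV-algebra and satisfying for all $x,y,\vec x,\vec y$: (i) $d(\delta(\vec x),\delta(x_1,0,0,\dots))=\delta(0,x_2,x_3,\dots)$; (ii) $\tfrac12(\delta(\vec x))=\delta(\tfrac12(x_1),\tfrac12(x_2),\dots)$; (iii) $\delta(x,x,\dots)=x$; (iv) $\delta(0,\vec x)=\tfrac12(\delta(\vec x))$; (v) $\delta(\vec x)\le\delta(x_1\oplus y_1,x_2\oplus y_2,\dots)$; (vi) $\tfrac12(x\ominus y)=\tfrac12(x)\ominus\tfrac12(y)$.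 $[0,1]$ is the standard $\delta$-algebra with $x\oplus y=\min\{1,x+y\}$, $\neg x=1-x$, $\delta(\vec x)=\sum_i x_i/2^i$. For a $\delta$-algebra $A$, $\mathrm{Max}\,A$ is the set of MV-algebra homomorphisms $A\to[0,1]$ with the subspace topology of the product space $[0,1]^A$ (a compact Hausdorff space). For $a\in A$, $\hat a\colon\mathrm{Max}\,A\to[0,1]$ is the continuous map $\hat a(h):=h(a)$. *)

theory Defs
  imports "HOL-Analysis.Analysis"
begin

text \<open>An algebra of type (omega,2,1,0) is given by its operations on a type 'a
  (the carrier is the whole type).  Infinite sequences x_1, x_2, ... are
  represented as functions nat => 'a with x_1 at index 0.\<close>

definition mv_algebra :: "('a \<Rightarrow> 'a \<Rightarrow> 'a) \<Rightarrow> ('a \<Rightarrow> 'a) \<Rightarrow> 'a \<Rightarrow> bool" where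
  "mv_algebra pl ng z \<longleftrightarrow>
     (\<forall>a b c. pl (pl a b) c = pl a (pl b c)) \<and>
     (\<forall>a b. pl a b = pl b a) \<and>
     (\<forall>a. pl a z = a) \<and>
     (\<forall>a. ng (ng a) = a) \<and>
     (\<forall>a. pl a (ng z) = ng z) \<and>
     (\<forall>a b. pl (ng (pl (ng a) b)) b = pl (ng (pl (ng b) a)) a)"

definition mv_odot :: "('a \<Rightarrow> 'a \<Rightarrow> 'a) \<Rightarrow> ('a \<Rightarrow> 'a) \<Rightarrow> 'a \<Rightarrow> 'a \<Rightarrow> 'a" where
  "mv_odot pl ng a b = ng (pl (ng a) (ng b))"

definition mv_ominus :: "('a \<Rightarrow> 'a \<Rightarrow> 'a) \<Rightarrow> ('a \<Rightarrow> 'a) \<Rightarrow> 'a \<Rightarrow> 'a \<Rightarrow> 'a" where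
  "mv_ominus pl ng a b = mv_odot pl ng a (ng b)"

definition mv_join :: "('a \<Rightarrow> 'a \<Rightarrow> 'a) \<Rightarrow> ('a \<Rightarrow> 'a) \<Rightarrow> 'a \<Rightarrow> 'a \<Rightarrow> 'a" where
  "mv_join pl ng a b = pl (ng (pl (ng a) b)) b"

definition mv_le :: "('a \<Rightarrow> 'a \<Rightarrow> 'a) \<Rightarrow> ('a \<Rightarrow> 'a) \<Rightarrow> 'a \<Rightarrow> 'a \<Rightarrow> bool" where
  "mv_le pl ng a b \<longleftrightarrow> mv_join pl ng a b = b"

definition mv_dist :: "('a \<Rightarrow> 'a \<Rightarrow> 'a) \<Rightarrow> ('a \<Rightarrow> 'a) \<Rightarrow> 'a \<Rightarrow> 'a \<Rightarrow> 'a" where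
  "mv_dist pl ng a b = pl (mv_ominus pl ng a b) (mv_ominus pl ng b a)"

definition dhalf :: "((nat \<Rightarrow> 'a) \<Rightarrow> 'a) \<Rightarrow> 'a \<Rightarrow> 'a \<Rightarrow> 'a" where
  "dhalf dl z x = dl (\<lambda>i. if i = 0 then x else z)"

definition delta_algebra ::
  "((nat \<Rightarrow> 'a) \<Rightarrow> 'a) \<Rightarrow> ('a \<Rightarrow> 'a \<Rightarrow> 'a) \<Rightarrow> ('a \<Rightarrow> 'a) \<Rightarrow> 'a \<Rightarrow> bool" where
  "delta_algebra dl pl ng z \<longleftrightarrow>
     mv_algebra pl ng z \<and>
     (\<forall>x. mv_dist pl ng (dl x) (dl (\<lambda>i. if i = 0 then x 0 else z))
            = dl (\<lambda>i. if i = 0 then z else x i)) \<and>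
     (\<forall>x. dhalf dl z (dl x) = dl (\<lambda>i. dhalf dl z (x i))) \<and>
     (\<forall>x. dl (\<lambda>i. x) = x) \<and>
     (\<forall>x. dl (\<lambda>i. if i = 0 then z else x (i - 1)) = dhalf dl z (dl x)) \<and>
     (\<forall>x y. mv_le pl ng (dl x) (dl (\<lambda>i. pl (x i) (y i)))) \<and>
     (\<forall>x y. dhalf dl z (mv_ominus pl ng x y)
            = mv_ominus pl ng (dhalf dl z x) (dhalf dl z y))"

text \<open>Max A: MV-algebra homomorphisms into the standard MV-algebra [0,1].
  It carries the subspace topology of the product topology on 'a => real
  (the product topology on [0,1]^A is the subspace topology of real^A).\<close>
definition MaxSpec :: "('a \<Rightarrow> 'a \<Rightarrow> 'a) \<Rightarrow> ('a \<Rightarrow> 'a) \<Rightarrow> 'a \<Rightarrow> ('a \<Rightarrow> real) set" where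
  "MaxSpec pl ng z = {h. (\<forall>a. h a \<in> {0..1}) \<and> h z = 0 \<and>
     (\<forall>a. h (ng a) = 1 - h a) \<and> (\<forall>a b. h (pl a b) = min 1 (h a + h b))}"

end

theory Submission
  imports Defs
begin

lemma MS_D:
  assumes "h \<in> MaxSpec pl ng z"
  shows "0 \<le> h a" "h a \<le> 1" "h z = 0" "h (ng a) = 1 - h a" "h (pl a b) = min 1 (h a + h b)"
  using assms unfolding MaxSpec_def by auto

lemma MS_odot: assumes "h \<in> MaxSpec pl ng z"
  shows "h (mv_odot pl ng a b) = max 0 (h a + h b - 1)"
  using MS_D[OF assms] unfolding mv_odot_def by (simp add: min_def max_def)

lemma MS_ominus: assumes "h \<in> MaxSpec pl ng z"
  shows "h (mv_ominus pl ng a b) = max 0 (h a - h b)"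
  using MS_D[OF assms] unfolding mv_ominus_def mv_odot_def by (simp add: min_def max_def)

lemma MS_dist: assumes "h \<in> MaxSpec pl ng z"
  shows "h (mv_dist pl ng a b) = \<bar>h a - h b\<bar>"
proof -
  have "h (mv_dist pl ng a b) = min 1 (max 0 (h a - h b) + max 0 (h b - h a))"
    unfolding mv_dist_def by (simp add: MS_D[OF assms] MS_ominus[OF assms])
  then show ?thesis using MS_D(1,2)[OF assms, of a] MS_D(1,2)[OF assms, of b]
    by (simp add: min_def max_def abs_if)
qed

lemma MS_le: assumes "h \<in> MaxSpec pl ng z" "mv_le pl ng a b"
  shows "h a \<le> h b"
proof -
  have "h (mv_join pl ng a b) = h b" using assms(2) by (simp add: mv_le_def)
  moreover have "h (mv_join pl ng a b) = max (h a) (h b)"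
  proof -
    have r: "0 \<le> h a" "h a \<le> 1" "0 \<le> h b" "h b \<le> 1" using MS_D(1,2)[OF assms(1)] by auto
    have "h (mv_join pl ng a b) = min 1 (1 - min 1 (1 - h a + h b) + h b)"
      unfolding mv_join_def by (simp add: MS_D(3-5)[OF assms(1)])
    then show ?thesis using r by (smt (verit))
  qed
  ultimately show ?thesis by simp
qed

lemma floor2: "\<lfloor>2 * (y::real)\<rfloor> = 2 * \<lfloor>y\<rfloor> + (if odd \<lfloor>2 * y\<rfloor> then 1 else 0)"
proof -
  have a: "of_int \<lfloor>y\<rfloor> \<le> y" "y < of_int \<lfloor>y\<rfloor> + 1" by linarith+
  have "\<lfloor>2 * y\<rfloor> \<ge> 2 * \<lfloor>y\<rfloor>" "\<lfloor>2 * y\<rfloor> \<le> 2 * \<lfloor>y\<rfloor> + 1"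
    using a by linarith+
  then have "\<lfloor>2 * y\<rfloor> = 2 * \<lfloor>y\<rfloor> \<or> \<lfloor>2 * y\<rfloor> = 2 * \<lfloor>y\<rfloor> + 1" by linarith
  then show ?thesis by auto
qed

lemma binexp:
  assumes "0 \<le> r" "r \<le> (1::real)"
  shows "\<exists>\<beta>. (\<lambda>k. (if \<beta> k then 1 else 0) / (2::real)^Suc k) sums r"
proof (cases "r = 1")
  case True
  have "(\<lambda>n. (1/2::real)^Suc n) sums 1" by (rule power_half_series)
  then have "(\<lambda>k. (if True then 1 else 0) / (2::real)^Suc k) sums 1"
    by (simp add: power_divide)
  then show ?thesis using True by (intro exI[of _ "\<lambda>_. True"]) simp
next
  case False
  then have r1: "r < 1" using assms by simp
  define \<beta> where "\<beta> k = odd \<lfloor>2^Suc k * r\<rfloor>" for k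
  have part: "(\<Sum>k<N. (if \<beta> k then 1 else 0) / (2::real)^Suc k) = of_int \<lfloor>2^N * r\<rfloor> / 2^N" for N
  proof (induction N)
    case 0 then show ?case using assms r1 by (simp add: floor_eq_iff)
  next
    case (Suc N)
    have f: "\<lfloor>2^Suc N * r\<rfloor> = 2 * \<lfloor>2^N * r\<rfloor> + (if \<beta> N then 1 else 0)"
      using floor2[of "2^N * r"] by (simp add: \<beta>_def mult.assoc)
    have f': "(of_int \<lfloor>2^Suc N * r\<rfloor>::real) = 2 * of_int \<lfloor>2^N * r\<rfloor> + (if \<beta> N then 1 else 0)"
      using f by simp
    have "(\<Sum>k<Suc N. (if \<beta> k then 1 else 0) / (2::real)^Suc k)
        = of_int \<lfloor>2^N * r\<rfloor> / 2^N + (if \<beta> N then 1 else 0) / 2^Suc N"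
      using Suc by simp
    also have "\<dots> = (2 * of_int \<lfloor>2^N * r\<rfloor> + (if \<beta> N then 1 else 0)) / 2^Suc N"
      by (simp add: field_simps)
    also have "\<dots> = of_int \<lfloor>2^Suc N * r\<rfloor> / 2^Suc N"
      by (simp only: f')
    finally show ?case .
  qed
  have "(\<lambda>N. of_int \<lfloor>2^N * r\<rfloor> / (2::real)^N) \<longlonglongrightarrow> r"
  proof -
    have "(\<lambda>N. r - of_int \<lfloor>2^N * r\<rfloor> / (2::real)^N) \<longlonglongrightarrow> 0"
    proof (rule Lim_null_comparison)
      show "\<forall>\<^sub>F N in sequentially. norm (r - of_int \<lfloor>2^N * r\<rfloor> / (2::real)^N) \<le> 1 / 2^N"
      proof (intro always_eventually allI)
        fix N :: nat
        have p: "(0::real) < 2^N" by simp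
        have "of_int \<lfloor>2^N * r\<rfloor> \<le> 2^N * r" "2^N * r < of_int \<lfloor>2^N * r\<rfloor> + 1" by linarith+
        then have "of_int \<lfloor>2^N * r\<rfloor> / 2^N \<le> r" "r < (of_int \<lfloor>2^N * r\<rfloor> + 1) / 2^N"
          using p by (simp_all add: field_simps)
        then show "norm (r - of_int \<lfloor>2^N * r\<rfloor> / (2::real)^N) \<le> 1 / 2^N"
          by (simp add: add_divide_distrib)
      qed
      show "(\<lambda>N. 1 / (2::real)^N) \<longlonglongrightarrow> 0"
        by (metis (no_types, lifting) ext LIMSEQ_inverse_realpow_zero
          inverse_eq_divide one_less_numeral_iff semiring_norm(76))
    qed
    then have "(\<lambda>N. r - (r - of_int \<lfloor>2^N * r\<rfloor> / (2::real)^N)) \<longlonglongrightarrow> r - 0"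
      by (intro tendsto_intros)
    then show ?thesis by simp
  qed
  then have "(\<lambda>k. (if \<beta> k then 1 else 0) / (2::real)^Suc k) sums r"
    unfolding sums_def using part by simp
  then show ?thesis by blast
qed

lemma cl0: "min 1 (max 0 (min 1 Y) + max 0 (min 1 Y)) = max 0 (min 1 (2 * (Y::real)))"
  by (cases "Y \<le> 0"; cases "Y \<le> 1/2"; cases "Y \<le> 1") (auto simp: min_def max_def)
lemma cl1: "max 0 (max 0 (min 1 Y) + max 0 (min 1 Y) - 1) = max 0 (min 1 (2 * (Y::real) - 1))"
  by (cases "Y \<le> 0"; cases "Y \<le> 1/2"; cases "Y \<le> 1") (auto simp: min_def max_def)

lemma clampN:
  "c < 2^N \<Longrightarrow> \<exists>b. \<forall>h\<in>MaxSpec pl ng z. h b = max 0 (min 1 (2^N * h a - real c))"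
proof (induction N arbitrary: c)
  case 0
  then have "c = 0" by simp
  then show ?case using MS_D(1,2) by (intro exI[of _ a]) fastforce
next
  case (Suc N)
  define c' where "c' = c div 2"
  have cc: "c = 2 * c' + c mod 2" unfolding c'_def by simp
  have "c' < 2^N" using Suc.prems unfolding c'_def by auto
  then obtain b' where b': "\<forall>h\<in>MaxSpec pl ng z. h b' = max 0 (min 1 (2^N * h a - real c'))"
    using Suc.IH by blast
  show ?case
  proof (cases "c mod 2 = 0")
    case True
    show ?thesis
    proof (intro exI[of _ "pl b' b'"] ballI)
      fix h assume h: "h \<in> MaxSpec pl ng z"
      have rc: "real c = 2 * real c'" using cc True by simp
      have e: "h b' = max 0 (min 1 (2^N * h a - real c'))" using b' h by blast
      have e2: "2^Suc N * h a - real c = 2 * (2^N * h a - real c')" using rc by simp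
      have "h (pl b' b') = min 1 (h b' + h b')" by (rule MS_D(5)[OF h])
      also have "\<dots> = max 0 (min 1 (2^Suc N * h a - real c))"
        unfolding e e2 by (rule cl0)
      finally show "h (pl b' b') = max 0 (min 1 (2^Suc N * h a - real c))" .
    qed
  next
    case False
    then have m1: "c mod 2 = 1" by simp
    show ?thesis
    proof (intro exI[of _ "mv_odot pl ng b' b'"] ballI)
      fix h assume h: "h \<in> MaxSpec pl ng z"
      have rc: "real c = 2 * real c' + 1" 
      proof -
        have "c = 2 * c' + 1" using cc m1 by simp
        then show ?thesis by simp
      qed
      have e: "h b' = max 0 (min 1 (2^N * h a - real c'))" using b' h by blast
      have e2: "2^Suc N * h a - real c = 2 * (2^N * h a - real c') - 1" using rc by simp
      have "h (mv_odot pl ng b' b') = max 0 (h b' + h b' - 1)" by (rule MS_odot[OF h])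
      also have "\<dots> = max 0 (min 1 (2^Suc N * h a - real c))"
        unfolding e e2 by (rule cl1)
      finally show "h (mv_odot pl ng b' b') = max 0 (min 1 (2^Suc N * h a - real c))" .
    qed
  qed
qed

lemma sep0:
  assumes h: "h \<in> MaxSpec pl ng z" and g: "g \<in> MaxSpec pl ng z" and lt: "h a < g a"
  shows "\<exists>f U V. open U \<and> open V \<and> h \<in> U \<and> g \<in> V \<and>
     (\<forall>h'\<in>U \<inter> MaxSpec pl ng z. h' f = 0) \<and> (\<forall>h'\<in>V \<inter> MaxSpec pl ng z. h' f = 1)"
proof -
  define s where "s = h a"
  define t where "t = g a"
  have st: "0 \<le> s" "s < t" "t \<le> 1" using MS_D(1,2)[OF h] MS_D(1,2)[OF g] lt s_def t_def by auto
  obtain N where N: "3 / (t - s) < (2::real)^N" using real_arch_pow[of 2 "3 / (t - s)"] by auto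
  have N': "3 < (t - s) * 2^N" using N st by (simp add: field_simps)
  define F where "F = \<lfloor>s * 2^N\<rfloor>"
  have F: "of_int F \<le> s * 2^N" "s * 2^N < of_int F + 1" "0 \<le> F" unfolding F_def using st by auto
  define c where "c = nat F + 1"
  have rc: "real c = of_int F + 1" unfolding c_def using F(3) by simp
  have p: "(0::real) < 2^N" by simp
  have tt: "t * 2^N \<le> 1 * 2^N" using st p by (intro mult_right_mono) auto
  have e3: "(t - s) * 2^N = t * 2^N - s * 2^N" by (simp add: left_diff_distrib)
  have "real c < 2^N" using rc F(1) N' tt e3 by linarith
  then have c: "c < 2^N" by (metis of_nat_less_iff of_nat_numeral of_nat_power)
  obtain f where f: "\<forall>h\<in>MaxSpec pl ng z. h f = max 0 (min 1 (2^N * h a - real c))"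
    using clampN[OF c, where pl=pl and ng=ng and z=z and a=a] by blast
  define U where "U = {h'::'a\<Rightarrow>real. 2^N * h' a < real c}"
  define V where "V = {h'::'a\<Rightarrow>real. real c + 1 < 2^N * h' a}"
  have oU: "open U" unfolding U_def
    by (rule open_Collect_less; intro continuous_on_mult continuous_on_add continuous_on_const continuous_on_product_coordinates)
  have oV: "open V" unfolding V_def
    by (rule open_Collect_less; intro continuous_on_mult continuous_on_add continuous_on_const continuous_on_product_coordinates)
  have hU: "h \<in> U" unfolding U_def using rc F s_def by (simp add: mult.commute)
  have e4: "2^N * g a = t * 2^N" by (simp add: t_def mult.commute)
  have gV: "g \<in> V" unfolding V_def mem_Collect_eq using rc F(1) N' e3 e4 by linarith
  have fU: "\<forall>h'\<in>U \<inter> MaxSpec pl ng z. h' f = 0"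
  proof
    fix h' assume "h' \<in> U \<inter> MaxSpec pl ng z"
    then have "h' f = max 0 (min 1 (2^N * h' a - real c))" "2^N * h' a < real c"
      using f unfolding U_def by auto
    then show "h' f = 0" by simp
  qed
  have fV: "\<forall>h'\<in>V \<inter> MaxSpec pl ng z. h' f = 1"
  proof
    fix h' assume "h' \<in> V \<inter> MaxSpec pl ng z"
    then have "h' f = max 0 (min 1 (2^N * h' a - real c))" "real c + 1 < 2^N * h' a"
      using f unfolding V_def by auto
    then show "h' f = 1" by simp
  qed
  show ?thesis apply (rule exI[of _ f], rule exI[of _ U], rule exI[of _ V]) using fU fV oU oV hU gV by blast
qed

lemma sep:
  assumes h: "h \<in> MaxSpec pl ng z" and g: "g \<in> MaxSpec pl ng z" and ne: "h \<noteq> g"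
  shows "\<exists>f U V. open U \<and> open V \<and> h \<in> U \<and> g \<in> V \<and>
     (\<forall>h'\<in>U \<inter> MaxSpec pl ng z. h' f = 0) \<and> (\<forall>h'\<in>V \<inter> MaxSpec pl ng z. h' f = 1)"
proof -
  obtain a where a: "h a \<noteq> g a" using ne by (auto simp: fun_eq_iff)
  show ?thesis
  proof (cases "h a < g a")
    case True then show ?thesis by (rule sep0[OF h g])
  next
    case False
    then have "h (ng a) < g (ng a)" using a MS_D(4)[OF h] MS_D(4)[OF g] by simp
    then show ?thesis by (rule sep0[OF h g])
  qed
qed


lemma cpt: "compact (PiE UNIV (\<lambda>_::'a. {0..1::real}))"
proof -
  have "compactin (product_topology (\<lambda>i::'a. euclidean) UNIV) (PiE UNIV (\<lambda>_. {0..1::real}))"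
    by (simp add: compactin_PiE)
  then show ?thesis by (simp add: euclidean_product_topology compactin_euclidean_iff)
qed

lemma M_closed: "closed (MaxSpec pl ng z)"
proof -
  have e: "MaxSpec pl ng z = {h. (\<forall>a. 0 \<le> h a) \<and> (\<forall>a. h a \<le> 1) \<and> h z = 0 \<and>
     (\<forall>a. h (ng a) = 1 - h a) \<and> (\<forall>a. \<forall>b. h (pl a b) = min 1 (h a + h b))}"
    unfolding MaxSpec_def by auto
  have c1: "closed {h::'a\<Rightarrow>real. \<forall>a. 0 \<le> h a}"
    by (intro closed_Collect_all closed_Collect_le continuous_on_const continuous_on_product_coordinates)
  have c2: "closed {h::'a\<Rightarrow>real. \<forall>a. h a \<le> 1}"
    by (intro closed_Collect_all closed_Collect_le continuous_on_const continuous_on_product_coordinates)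
  have c3: "closed {h::'a\<Rightarrow>real. h z = 0}"
    by (intro closed_Collect_eq continuous_on_const continuous_on_product_coordinates)
  have c4: "closed {h::'a\<Rightarrow>real. \<forall>a. h (ng a) = 1 - h a}"
    by (intro closed_Collect_all closed_Collect_eq continuous_on_diff continuous_on_const continuous_on_product_coordinates)
  have c5: "closed {h::'a\<Rightarrow>real. \<forall>a. \<forall>b. h (pl a b) = min 1 (h a + h b)}"
    by (intro closed_Collect_all closed_Collect_eq continuous_on_min continuous_on_add continuous_on_const continuous_on_product_coordinates)
  show ?thesis unfolding e
    using closed_Collect_conj[OF c1 closed_Collect_conj[OF c2 closed_Collect_conj[OF c3 closed_Collect_conj[OF c4 c5]]]] .
qed

lemma M_compact: "compact (MaxSpec pl ng z)"
proof -
  have "MaxSpec pl ng z = PiE UNIV (\<lambda>_. {0..1::real}) \<inter> MaxSpec pl ng z"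
    unfolding MaxSpec_def by (auto simp: PiE_def Pi_def)
  moreover have "compact (PiE UNIV (\<lambda>_. {0..1::real}) \<inter> MaxSpec pl ng z)"
    by (rule compact_Int_closed[OF cpt M_closed])
  ultimately show ?thesis by simp
qed

lemma closedin_compact:
  assumes "closedin (top_of_set (MaxSpec pl ng z)) C"
  shows "compact C" "C \<subseteq> MaxSpec pl ng z"
proof -
  show sub: "C \<subseteq> MaxSpec pl ng z" using closedin_subset[OF assms] by simp
  have "closed C" using closedin_closed_trans[OF assms M_closed] .
  then have "compact (MaxSpec pl ng z \<inter> C)" by (rule compact_Int_closed[OF M_compact])
  then show "compact C" using sub by (simp add: Int_absorb1)
qed

lemma fin_meet:
  "finite E \<Longrightarrow> \<exists>F. \<forall>h\<in>MaxSpec pl ng z. ((\<exists>s\<in>E. h s = 0) \<longrightarrow> h F = 0) \<and> ((\<forall>s\<in>E. h s = 1) \<longrightarrow> h F = 1)"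
proof (induction E rule: finite_induct)
  case empty
  show ?case by (intro exI[of _ "ng z"]) (simp add: MS_D)
next
  case (insert x E)
  then obtain F where F: "\<forall>h\<in>MaxSpec pl ng z. ((\<exists>s\<in>E. h s = 0) \<longrightarrow> h F = 0) \<and> ((\<forall>s\<in>E. h s = 1) \<longrightarrow> h F = 1)"
    by blast
  show ?case
  proof (intro exI[of _ "mv_odot pl ng F x"] ballI)
    fix h assume h: "h \<in> MaxSpec pl ng z"
    have r: "h F \<le> 1" "h x \<le> 1" "0 \<le> h F" "0 \<le> h x" using MS_D(1,2)[OF h] by auto
    show "((\<exists>s\<in>insert x E. h s = 0) \<longrightarrow> h (mv_odot pl ng F x) = 0) \<and>
          ((\<forall>s\<in>insert x E. h s = 1) \<longrightarrow> h (mv_odot pl ng F x) = 1)"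
      using F h r by (auto simp: MS_odot[OF h])
  qed
qed

lemma fin_join:
  "finite E \<Longrightarrow> \<exists>F. \<forall>h\<in>MaxSpec pl ng z. ((\<exists>s\<in>E. h s = 1) \<longrightarrow> h F = 1) \<and> ((\<forall>s\<in>E. h s = 0) \<longrightarrow> h F = 0)"
proof (induction E rule: finite_induct)
  case empty
  show ?case by (intro exI[of _ "z"]) (simp add: MS_D)
next
  case (insert x E)
  then obtain F where F: "\<forall>h\<in>MaxSpec pl ng z. ((\<exists>s\<in>E. h s = 1) \<longrightarrow> h F = 1) \<and> ((\<forall>s\<in>E. h s = 0) \<longrightarrow> h F = 0)"
    by blast
  show ?case
  proof (intro exI[of _ "pl F x"] ballI)
    fix h assume h: "h \<in> MaxSpec pl ng z"
    have r: "h F \<le> 1" "h x \<le> 1" "0 \<le> h F" "0 \<le> h x" using MS_D(1,2)[OF h] by auto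
    show "((\<exists>s\<in>insert x E. h s = 1) \<longrightarrow> h (pl F x) = 1) \<and>
          ((\<forall>s\<in>insert x E. h s = 0) \<longrightarrow> h (pl F x) = 0)"
      using F h r by (auto simp: MS_D(5)[OF h])
  qed
qed

lemma urysohn:
  assumes cC: "closedin (top_of_set (MaxSpec pl ng z)) C"
    and cD: "closedin (top_of_set (MaxSpec pl ng z)) D"
    and disj: "C \<inter> D = {}"
  shows "\<exists>b. (\<forall>h\<in>C. h b = 0) \<and> (\<forall>h\<in>D. h b = 1)"
proof -
  let ?M = "MaxSpec pl ng z"
  note C = closedin_compact[OF cC] and D = closedin_compact[OF cD]
  define R where "R = (\<lambda>h g (p :: 'a \<times> ('a \<Rightarrow> real) set \<times> ('a \<Rightarrow> real) set).
     open (fst (snd p)) \<and> open (snd (snd p)) \<and> h \<in> fst (snd p) \<and> g \<in> snd (snd p) \<and>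
     (\<forall>h'\<in>fst (snd p) \<inter> ?M. h' (fst p) = 0) \<and> (\<forall>h'\<in>snd (snd p) \<inter> ?M. h' (fst p) = 1))"
  have "\<forall>hg. \<exists>p. fst hg \<in> C \<longrightarrow> snd hg \<in> D \<longrightarrow> R (fst hg) (snd hg) p"
  proof
    fix hg :: "('a \<Rightarrow> real) \<times> ('a \<Rightarrow> real)"
    obtain h g where hg: "hg = (h, g)" by (cases hg)
    show "\<exists>p. fst hg \<in> C \<longrightarrow> snd hg \<in> D \<longrightarrow> R (fst hg) (snd hg) p"
    proof (cases "h \<in> C \<and> g \<in> D")
      case True
      then have ne: "h \<noteq> g" using disj by auto
      have hM: "h \<in> ?M" using True C(2) by auto
      have gM: "g \<in> ?M" using True D(2) by auto
      obtain f0 U0 V0 where fuv: "open U0 \<and> open V0 \<and> h \<in> U0 \<and> g \<in> V0 \<and>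
         (\<forall>h'\<in>U0 \<inter> ?M. h' f0 = 0) \<and> (\<forall>h'\<in>V0 \<inter> ?M. h' f0 = 1)"
        using sep[OF hM gM ne] by blast
      have "R h g (f0, U0, V0)" unfolding R_def using fuv by simp
      then show ?thesis unfolding hg by auto
    next
      case False
      then show ?thesis unfolding hg by auto
    qed
  qed
  then obtain P where P: "\<And>hg. fst hg \<in> C \<Longrightarrow> snd hg \<in> D \<Longrightarrow> R (fst hg) (snd hg) (P hg)"
    unfolding choice_iff by blast
  define f where "f h g = fst (P (h, g))" for h g
  define U where "U h g = fst (snd (P (h, g)))" for h g
  define V where "V h g = snd (snd (P (h, g)))" for h g
  have fUV: "open (U h g) \<and> open (V h g) \<and> h \<in> U h g \<and> g \<in> V h g \<and>
     (\<forall>h'\<in>U h g \<inter> ?M. h' (f h g) = 0) \<and> (\<forall>h'\<in>V h g \<inter> ?M. h' (f h g) = 1)"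
    if "h \<in> C" "g \<in> D" for h g
    using P[of "(h, g)"] that unfolding R_def f_def U_def V_def by simp
  have step1: "\<exists>F W. open W \<and> g \<in> W \<and> (\<forall>h\<in>C. h F = 0) \<and> (\<forall>h'\<in>W \<inter> ?M. h' F = 1)"
    if g: "g \<in> D" for g
  proof -
    have "C \<subseteq> (\<Union>h\<in>C. U h g)" using fUV g by blast
    then obtain T where T: "T \<subseteq> C" "finite T" "C \<subseteq> (\<Union>h\<in>T. U h g)"
      using compactE_image[OF C(1), of C "\<lambda>h. U h g"] fUV g by blast
    obtain F where F: "\<forall>h\<in>?M. ((\<exists>s\<in>(\<lambda>h. f h g) ` T. h s = 0) \<longrightarrow> h F = 0) \<and>
        ((\<forall>s\<in>(\<lambda>h. f h g) ` T. h s = 1) \<longrightarrow> h F = 1)"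
      using fin_meet[of "(\<lambda>h. f h g) ` T" pl ng z] T(2) by blast
    define W where "W = (\<Inter>h\<in>T. V h g)"
    have "open W" unfolding W_def using T fUV g by (intro open_INT) auto
    moreover have "g \<in> W" unfolding W_def using T fUV g by auto
    moreover have "\<forall>h\<in>C. h F = 0"
    proof
      fix h' assume h': "h' \<in> C"
      then obtain h0 where "h0 \<in> T" "h' \<in> U h0 g" using T by blast
      then have "h' (f h0 g) = 0" using fUV[of h0 g] T g h' C(2) by blast
      then show "h' F = 0" using F h' C(2) \<open>h0 \<in> T\<close> by blast
    qed
    moreover have "\<forall>h'\<in>W \<inter> ?M. h' F = 1"
    proof
      fix h' assume h': "h' \<in> W \<inter> ?M"
      have "\<forall>s\<in>(\<lambda>h. f h g) ` T. h' s = 1"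
      proof
        fix s assume "s \<in> (\<lambda>h. f h g) ` T"
        then obtain h0 where h0: "h0 \<in> T" "s = f h0 g" by blast
        then have "h' \<in> V h0 g" using h' unfolding W_def by blast
        then show "h' s = 1" using fUV[of h0 g] h0 T g h' by blast
      qed
      then show "h' F = 1" using F h' by blast
    qed
    ultimately show ?thesis by blast
  qed
  then obtain F W where FW: "\<And>g. g \<in> D \<Longrightarrow> open (W g) \<and> g \<in> W g \<and> (\<forall>h\<in>C. h (F g) = 0) \<and> (\<forall>h'\<in>W g \<inter> ?M. h' (F g) = 1)"
    by metis
  have "D \<subseteq> (\<Union>g\<in>D. W g)" using FW by blast
  then obtain T where T: "T \<subseteq> D" "finite T" "D \<subseteq> (\<Union>g\<in>T. W g)"
    using compactE_image[OF D(1), of D W] FW by blast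
  obtain G where G: "\<forall>h\<in>?M. ((\<exists>s\<in>F ` T. h s = 1) \<longrightarrow> h G = 1) \<and> ((\<forall>s\<in>F ` T. h s = 0) \<longrightarrow> h G = 0)"
    using fin_join[of "F ` T" pl ng z] T(2) by blast
  have "\<forall>h\<in>C. h G = 0"
  proof
    fix h assume h: "h \<in> C"
    have "\<forall>s\<in>F ` T. h s = 0" using FW T h by blast
    then show "h G = 0" using G h C(2) by blast
  qed
  moreover have "\<forall>h\<in>D. h G = 1"
  proof
    fix h assume h: "h \<in> D"
    then obtain g where g: "g \<in> T" "h \<in> W g" using T by blast
    then have "h (F g) = 1" using FW[of g] T h D(2) by blast
    then show "h G = 1" using G h D(2) g by blast
  qed
  ultimately show ?thesis by blast
qed

context
  fixes dl pl ng z
  assumes D: "delta_algebra dl pl ng z"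
begin

lemma mv: "mv_algebra pl ng z" using D by (simp add: delta_algebra_def)
lemma A1: "mv_dist pl ng (dl x) (dl (\<lambda>i. if i = 0 then x 0 else z))
            = dl (\<lambda>i. if i = 0 then z else x i)"
  using D unfolding delta_algebra_def by (elim conjE allE) assumption
lemma A3: "dl (\<lambda>i. x) = x"
  using D unfolding delta_algebra_def by (elim conjE allE) assumption
lemma A4: "dl (\<lambda>i. if i = 0 then z else x (i - 1)) = dhalf dl z (dl x)"
  using D unfolding delta_algebra_def by (elim conjE allE) assumption
lemma A5: "mv_le pl ng (dl x) (dl (\<lambda>i. pl (x i) (y i)))"
  using D unfolding delta_algebra_def by (elim conjE allE) assumption
lemma plz: "pl a z = a" "pl z a = a" using mv unfolding mv_algebra_def by metis+

lemma half_val: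
  assumes h: "h \<in> MaxSpec pl ng z"
  shows "h (dhalf dl z x) = h x / 2"
proof -
  have ax1: "mv_dist pl ng (dl (\<lambda>i. x)) (dl (\<lambda>i. if i = 0 then x else z))
            = dl (\<lambda>i. if i = 0 then z else x)"
    using A1[of "\<lambda>i. x"] by simp
  have ax3: "dl (\<lambda>i. x) = x" by (rule A3)
  have ax4: "dl (\<lambda>i. if i = 0 then z else x) = dhalf dl z (dl (\<lambda>i. x))"
    using A4[of "\<lambda>i. x"] by simp
  have e1: "mv_dist pl ng x (dhalf dl z x) = dhalf dl z x"
    using ax1 ax3 ax4 by (simp add: dhalf_def)
  have ax5: "mv_le pl ng (dl (\<lambda>i. if i = 0 then x else z))
      (dl (\<lambda>i. pl (if i = 0 then x else z) (if i = 0 then z else x)))"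
    by (rule A5)
  have eq: "(\<lambda>i. pl (if i = 0 then x else z) (if i = 0 then z else x)) = (\<lambda>i. x)"
    by (auto simp: plz)
  have "mv_le pl ng (dhalf dl z x) x" unfolding dhalf_def using ax5 by (simp only: eq ax3)
  then have le: "h (dhalf dl z x) \<le> h x" using MS_le[OF h] by blast
  from e1 have "\<bar>h x - h (dhalf dl z x)\<bar> = h (dhalf dl z x)"
    using MS_dist[OF h] by metis
  with le show ?thesis by linarith
qed

lemma delta_rec:
  assumes h: "h \<in> MaxSpec pl ng z"
  shows "h (dl x) = h (x 0) / 2 + h (dl (\<lambda>i. x (Suc i))) / 2"
proof -
  have ax1: "mv_dist pl ng (dl x) (dl (\<lambda>i. if i = 0 then x 0 else z))
            = dl (\<lambda>i. if i = 0 then z else x i)"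
    by (rule A1)
  have ax4: "dl (\<lambda>i. if i = 0 then z else (\<lambda>i. x (Suc i)) (i - 1)) = dhalf dl z (dl (\<lambda>i. x (Suc i)))"
    by (rule A4)
  have "(\<lambda>i. if i = 0 then z else (\<lambda>i. x (Suc i)) (i - 1)) = (\<lambda>i. if i = 0 then z else x i)"
    by (auto simp: fun_eq_iff)
  with ax4 have ax4': "dl (\<lambda>i. if i = 0 then z else x i) = dhalf dl z (dl (\<lambda>i. x (Suc i)))" by simp
  have ax5: "mv_le pl ng (dl (\<lambda>i. if i = 0 then x 0 else z))
      (dl (\<lambda>i. pl (if i = 0 then x 0 else z) (if i = 0 then z else x i)))"
    by (rule A5)
  have "(\<lambda>i. pl (if i = 0 then x 0 else z) (if i = 0 then z else x i)) = x"
    by (auto simp: plz fun_eq_iff)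
  with ax5 have "mv_le pl ng (dhalf dl z (x 0)) (dl x)" by (simp add: dhalf_def)
  then have le: "h (x 0) / 2 \<le> h (dl x)" using MS_le[OF h] half_val[OF h] by metis
  have "\<bar>h (dl x) - h (x 0) / 2\<bar> = h (dl (\<lambda>i. x (Suc i))) / 2"
    using ax1 ax4' MS_dist[OF h] half_val[OF h] by (metis dhalf_def)
  with le show ?thesis by linarith
qed

lemma delta_partial:
  assumes h: "h \<in> MaxSpec pl ng z"
  shows "h (dl x) = (\<Sum>k<N. h (x k) / 2^(Suc k)) + h (dl (\<lambda>i. x (i + N))) / 2^N"
proof (induction N)
  case 0 then show ?case by simp
next
  case (Suc N)
  have "h (dl (\<lambda>i. x (i + N))) = h (x N) / 2 + h (dl (\<lambda>i. x (i + Suc N))) / 2"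
    using delta_rec[OF h, of "\<lambda>i. x (i + N)"] by simp
  with Suc show ?case by (simp add: field_simps)
qed

lemma delta_sums:
  assumes h: "h \<in> MaxSpec pl ng z"
  shows "(\<lambda>k. h (x k) / 2^(Suc k)) sums h (dl x)"
proof -
  have lim0: "(\<lambda>N. h (dl (\<lambda>i. x (i + N))) / 2^N) \<longlonglongrightarrow> 0"
  proof (rule Lim_null_comparison)
    show "\<forall>\<^sub>F N in sequentially. norm (h (dl (\<lambda>i. x (i + N))) / 2^N) \<le> 1 / 2^N"
      using MS_D(1,2)[OF h] by (auto intro!: always_eventually divide_right_mono)
    show "(\<lambda>N. 1 / (2::real)^N) \<longlonglongrightarrow> 0"
      by (metis (no_types, lifting) ext LIMSEQ_inverse_realpow_zero
    inverse_eq_divide one_less_numeral_iff semiring_norm(76))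
  qed
  have "(\<lambda>N. h (dl x) - h (dl (\<lambda>i. x (i + N))) / 2^N) \<longlonglongrightarrow> h (dl x) - 0"
    by (intro tendsto_intros lim0)
  moreover have "(\<lambda>N. h (dl x) - h (dl (\<lambda>i. x (i + N))) / 2^N) = (\<lambda>N. \<Sum>k<N. h (x k) / 2^(Suc k))"
    using delta_partial[OF h] by (auto simp: fun_eq_iff algebra_simps)
  ultimately show ?thesis by (simp add: sums_def)
qed

lemma scale:
  assumes "0 \<le> r" "r \<le> 1"
  shows "\<exists>e. \<forall>h\<in>MaxSpec pl ng z. h e = r * h b"
proof -
  obtain \<beta> where \<beta>: "(\<lambda>k. (if \<beta> k then 1 else 0) / (2::real)^Suc k) sums r"
    using binexp[OF assms] by blast
  show ?thesis
  proof (intro exI ballI)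
    fix h assume h: "h \<in> MaxSpec pl ng z"
    have "(\<lambda>k. h (if \<beta> k then b else z) / 2^Suc k) sums h (dl (\<lambda>k. if \<beta> k then b else z))"
      by (rule delta_sums[OF h])
    moreover have "(\<lambda>k. h (if \<beta> k then b else z) / 2^Suc k) = (\<lambda>k. (if \<beta> k then 1 else 0) / (2::real)^Suc k * h b)"
      using MS_D(3)[OF h] by (auto simp: fun_eq_iff)
    ultimately have "(\<lambda>k. (if \<beta> k then 1 else 0) / (2::real)^Suc k * h b) sums h (dl (\<lambda>k. if \<beta> k then b else z))"
      by simp
    moreover have "(\<lambda>k. (if \<beta> k then 1 else 0) / (2::real)^Suc k * h b) sums (r * h b)"
      by (rule sums_mult2[OF \<beta>])
    ultimately show "h (dl (\<lambda>k. if \<beta> k then b else z)) = r * h b" by (metis sums_unique2)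
  qed
qed

end

theorem mainTheorem5:
  fixes dl :: "(nat \<Rightarrow> 'a) \<Rightarrow> 'a" and pl :: "'a \<Rightarrow> 'a \<Rightarrow> 'a"
    and ng :: "'a \<Rightarrow> 'a" and z :: 'a
    and n :: nat and C :: "nat \<Rightarrow> ('a \<Rightarrow> real) set" and r :: "nat \<Rightarrow> real"
  assumes "delta_algebra dl pl ng z"
    and "\<And>i. i \<in> {1..n} \<Longrightarrow> closedin (top_of_set (MaxSpec pl ng z)) (C i)"
    and "\<And>i j. i \<in> {1..n} \<Longrightarrow> j \<in> {1..n} \<Longrightarrow> i \<noteq> j \<Longrightarrow> C i \<inter> C j = {}"
    and "\<And>i. i \<in> {1..n} \<Longrightarrow> r i \<in> {0..1}"
  shows "\<exists>a. \<forall>i\<in>{1..n}. \<forall>h\<in>C i. h a = r i"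
proof -
  let ?M = "MaxSpec pl ng z"
  have sub: "C i \<subseteq> ?M" if "i \<in> {1..n}" for i
    using closedin_subset[OF assms(2)[OF that]] by simp
  have per: "\<forall>i\<in>{1..n}. \<exists>e. (\<forall>h\<in>C i. h e = r i) \<and> (\<forall>j\<in>{1..n}. j \<noteq> i \<longrightarrow> (\<forall>h\<in>C j. h e = 0))"
  proof
    fix i assume i: "i \<in> {1..n}"
    define E where "E = \<Union> (C ` ({1..n} - {i}))"
    have cE: "closedin (top_of_set ?M) E" unfolding E_def
      by (rule closedin_Union) (auto intro: assms(2))
    have dj: "E \<inter> C i = {}" unfolding E_def using assms(3) i by blast
    obtain b where b: "\<forall>h\<in>E. h b = 0" "\<forall>h\<in>C i. h b = 1"
      using urysohn[OF cE assms(2)[OF i] dj] by blast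
    have r01: "0 \<le> r i" "r i \<le> 1" using assms(4)[OF i] by auto
    obtain e where e: "\<forall>h\<in>?M. h e = r i * h b"
      using scale[OF assms(1) r01, of b] by blast
    show "\<exists>e. (\<forall>h\<in>C i. h e = r i) \<and> (\<forall>j\<in>{1..n}. j \<noteq> i \<longrightarrow> (\<forall>h\<in>C j. h e = 0))"
    proof (intro exI[of _ e] conjI ballI impI)
      fix h assume h: "h \<in> C i"
      then have "h \<in> ?M" using sub[OF i] by blast
      then have "h e = r i * h b" using e by blast
      moreover have "h b = 1" using b h by blast
      ultimately show "h e = r i" by simp
    next
      fix j h assume j: "j \<in> {1..n}" "j \<noteq> i" and h: "h \<in> C j"
      then have "h \<in> E" unfolding E_def by blast
      have "h \<in> ?M" using sub[OF j(1)] h by blast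
      then have "h e = r i * h b" using e by blast
      moreover have "h b = 0" using b \<open>h \<in> E\<close> by blast
      ultimately show "h e = 0" by simp
    qed
  qed
  from bchoice[OF per] obtain e where
    e: "\<And>i. i \<in> {1..n} \<Longrightarrow> (\<forall>h\<in>C i. h (e i) = r i) \<and> (\<forall>j\<in>{1..n}. j \<noteq> i \<longrightarrow> (\<forall>h\<in>C j. h (e i) = 0))"
    by blast
  have acc: "m \<le> n \<Longrightarrow> \<exists>a. \<forall>i\<in>{1..n}. \<forall>h\<in>C i. h a = (if i \<le> m then r i else 0)" for m
  proof (induction m)
    case 0
    show ?case
    proof (intro exI[of _ z] ballI)
      fix i h assume i: "i \<in> {1..n}" and h: "h \<in> C i"
      then show "h z = (if i \<le> 0 then r i else 0)" using MS_D(3)[of h] sub[OF i] by auto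
    qed
  next
    case (Suc m)
    then obtain a where a: "\<forall>i\<in>{1..n}. \<forall>h\<in>C i. h a = (if i \<le> m then r i else 0)" by auto
    have sm: "Suc m \<in> {1..n}" using Suc.prems by auto
    show ?case
    proof (intro exI[of _ "pl a (e (Suc m))"] ballI)
      fix i h assume i: "i \<in> {1..n}" and h: "h \<in> C i"
      have hM: "h \<in> ?M" using sub[OF i] h by blast
      have r01: "0 \<le> r i" "r i \<le> 1" using assms(4)[OF i] by auto
      have "h (pl a (e (Suc m))) = min 1 (h a + h (e (Suc m)))" by (rule MS_D(5)[OF hM])
      moreover have "h a = (if i \<le> m then r i else 0)" using a i h by blast
      moreover have "h (e (Suc m)) = (if i = Suc m then r i else 0)"
        using e[OF sm] i h by auto
      ultimately show "h (pl a (e (Suc m))) = (if i \<le> Suc m then r i else 0)"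
        using r01 by auto
    qed
  qed
  obtain a where "\<forall>i\<in>{1..n}. \<forall>h\<in>C i. h a = (if i \<le> n then r i else 0)" using acc[of n] by blast
  then show ?thesis by (intro exI[of _ a]) auto
qed

end
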